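(* Let $S$ be a monoid and $A_S$ an artinian projective right $S$-act, and let $T=\mathrm{End}(A_S)$ (a monoid under composition). Then $T$ satisfies the descending chain condition on principal right ideals $fT$, $f\in T$.
   Context: $A_S$ is artinian if its congruences satisfy the descending chain condition. $A_S$ is projective if for every surjective homomorphism $g:B\to C$ and every homomorphism $h:A\to C$ there is $k:A\to B$ with $gk=h$. In $T$, the product $fg$ denotes the composition $f\circ g$, and $fT=\{f\circ g: g\in T\}$. *)

theory Defs
  imports "HOL-Library.FuncSet"
begin

text \<open>The monoid S is the whole type 's (class monoid_mult). A right S-act is a carrier
  set A together with an action map act :: 'a => 's => 'a, written a.s = act a s.\<close>

definition right_act :: "'a set \<Rightarrow> ('a \<Rightarrow> 's::monoid_mult \<Rightarrow> 'a) \<Rightarrow> bool" where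
  "right_act A act \<longleftrightarrow>
     (\<forall>a\<in>A. \<forall>s. act a s \<in> A) \<and>
     (\<forall>a\<in>A. act a 1 = a) \<and>
     (\<forall>a\<in>A. \<forall>s t. act (act a s) t = act a (s * t))"

definition act_hom ::
  "'a set \<Rightarrow> ('a \<Rightarrow> 's::monoid_mult \<Rightarrow> 'a) \<Rightarrow> 'b set \<Rightarrow> ('b \<Rightarrow> 's \<Rightarrow> 'b) \<Rightarrow> ('a \<Rightarrow> 'b) \<Rightarrow> bool" where
  "act_hom A actA B actB f \<longleftrightarrow>
     f \<in> A \<rightarrow> B \<and> (\<forall>a\<in>A. \<forall>s. f (actA a s) = actB (f a) s)"

definition act_congruence :: "'a set \<Rightarrow> ('a \<Rightarrow> 's::monoid_mult \<Rightarrow> 'a) \<Rightarrow> 'a rel \<Rightarrow> bool" where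
  "act_congruence A act \<rho> \<longleftrightarrow>
     equiv A \<rho> \<and> (\<forall>a b s. (a, b) \<in> \<rho> \<longrightarrow> (act a s, act b s) \<in> \<rho>)"

definition artinian_act :: "'a set \<Rightarrow> ('a \<Rightarrow> 's::monoid_mult \<Rightarrow> 'a) \<Rightarrow> bool" where
  "artinian_act A act \<longleftrightarrow>
     (\<forall>\<rho> :: nat \<Rightarrow> 'a rel.
        (\<forall>n. act_congruence A act (\<rho> n)) \<and> (\<forall>n. \<rho> (Suc n) \<subseteq> \<rho> n) \<longrightarrow>
        (\<exists>N. \<forall>m\<ge>N. \<rho> m = \<rho> N))"

text \<open>Projective (test acts B, C range over acts whose elements live in the same type as A).\<close>
definition projective_act :: "'a set \<Rightarrow> ('a \<Rightarrow> 's::monoid_mult \<Rightarrow> 'a) \<Rightarrow> bool" where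
  "projective_act A act \<longleftrightarrow>
     (\<forall>(B :: 'a set) actB (C :: 'a set) actC g h.
        right_act B actB \<and> right_act C actC \<and>
        act_hom B actB C actC g \<and> g ` B = C \<and> act_hom A act C actC h \<longrightarrow>
        (\<exists>k. act_hom A act B actB k \<and> (\<forall>a\<in>A. g (k a) = h a)))"

text \<open>End(A_S): endomorphisms, represented as extensional functions on A, composed by
  compose A (so fg = f o g).\<close>
definition End_act :: "'a set \<Rightarrow> ('a \<Rightarrow> 's::monoid_mult \<Rightarrow> 'a) \<Rightarrow> ('a \<Rightarrow> 'a) set" where
  "End_act A act = {f. f \<in> extensional A \<and> act_hom A act A act f}"

definition principal_right_ideal :: "'a set \<Rightarrow> ('a \<Rightarrow> 'a) set \<Rightarrow> ('a \<Rightarrow> 'a) \<Rightarrow> ('a \<Rightarrow> 'a) set" where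
  "principal_right_ideal A T f = {compose A f g | g. g \<in> T}"

end

theory Submission
  imports Defs
begin

definition rees :: "'a set \<Rightarrow> 'a set \<Rightarrow> 'a rel" where
  "rees A B = {(a,b). a \<in> A \<and> b \<in> A \<and> (a = b \<or> (a \<in> B \<and> b \<in> B))}"

lemma rees_cong:
  assumes ra: "right_act A act" and h: "act_hom A act A act f"
  shows "act_congruence A act (rees A (f ` A))"
proof -
  have fA: "\<And>a. a \<in> A \<Longrightarrow> f a \<in> A" using h unfolding act_hom_def by auto
  have eq: "equiv A (rees A (f ` A))"
    unfolding equiv_def refl_on_def sym_def trans_def rees_def by blast
  have "(act a s, act b s) \<in> rees A (f ` A)" if ab: "(a,b) \<in> rees A (f ` A)" for a b s
  proof -
    from ab have a: "a \<in> A" "b \<in> A" unfolding rees_def by auto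
    have c: "act a s \<in> A" "act b s \<in> A" using ra a unfolding right_act_def by auto
    show ?thesis
    proof (cases "a = b")
      case True then show ?thesis using c unfolding rees_def by auto
    next
      case False
      then obtain x y where xy: "x \<in> A" "y \<in> A" "a = f x" "b = f y"
        using ab unfolding rees_def by blast
      have "act a s = f (act x s)" "act b s = f (act y s)"
        using h xy unfolding act_hom_def by auto
      moreover have "act x s \<in> A" "act y s \<in> A" using ra xy unfolding right_act_def by auto
      ultimately show ?thesis using c unfolding rees_def by auto
    qed
  qed
  then show ?thesis using eq unfolding act_congruence_def by blast
qed

lemma End_comp:
  assumes "right_act A act" "g \<in> End_act A act" "h \<in> End_act A act"
  shows "compose A g h \<in> End_act A act"
  using assms unfolding End_act_def act_hom_def right_act_def by (auto simp: compose_eq Pi_def)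

lemma End_id: "right_act A act \<Longrightarrow> (\<lambda>x\<in>A. x) \<in> End_act A act"
  unfolding End_act_def act_hom_def right_act_def by auto

lemma End_Pi: "g \<in> End_act A act \<Longrightarrow> g \<in> A \<rightarrow> A"
  unfolding End_act_def act_hom_def by auto

lemma self_in:
  assumes "right_act A act" "g \<in> End_act A act"
  shows "g \<in> principal_right_ideal A (End_act A act) g"
proof -
  have "compose A g (\<lambda>x\<in>A. x) = g"
    using assms by (intro compose_Id) (auto simp: End_act_def act_hom_def)
  then show ?thesis unfolding principal_right_ideal_def using End_id[OF assms(1)] by force
qed

lemma ideal_mono:
  assumes "right_act A act" "g \<in> principal_right_ideal A (End_act A act) h"
  shows "principal_right_ideal A (End_act A act) g \<subseteq> principal_right_ideal A (End_act A act) h"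
proof
  fix x assume "x \<in> principal_right_ideal A (End_act A act) g"
  then obtain k where k: "k \<in> End_act A act" "x = compose A g k"
    unfolding principal_right_ideal_def by auto
  obtain g' where g': "g' \<in> End_act A act" "g = compose A h g'"
    using assms(2) unfolding principal_right_ideal_def by auto
  have "x = compose A h (compose A g' k)"
    using k g' compose_assoc[OF End_Pi[OF k(1)], of h g'] by simp
  then show "x \<in> principal_right_ideal A (End_act A act) h"
    unfolding principal_right_ideal_def using End_comp[OF assms(1) g'(1) k(1)] by auto
qed

theorem mainTheorem19:
  fixes A :: "'a set" and act :: "'a \<Rightarrow> 's::monoid_mult \<Rightarrow> 'a"
  assumes "right_act A act"
    and "artinian_act A act"
    and "projective_act A act"
  shows "\<forall>f :: nat \<Rightarrow> ('a \<Rightarrow> 'a).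
           (\<forall>n. f n \<in> End_act A act) \<and>
           (\<forall>n. principal_right_ideal A (End_act A act) (f (Suc n))
                  \<subseteq> principal_right_ideal A (End_act A act) (f n)) \<longrightarrow>
           (\<exists>N. \<forall>m\<ge>N. principal_right_ideal A (End_act A act) (f m)
                        = principal_right_ideal A (End_act A act) (f N))"
proof (intro allI impI)
  fix f :: "nat \<Rightarrow> ('a \<Rightarrow> 'a)"
  let ?T = "End_act A act"
  let ?I = "\<lambda>g. principal_right_ideal A ?T g"
  assume H: "(\<forall>n. f n \<in> ?T) \<and> (\<forall>n. ?I (f (Suc n)) \<subseteq> ?I (f n))"
  have fT: "\<And>n. f n \<in> ?T" using H by blast
  have chain: "?I (f m) \<subseteq> ?I (f N)" if "N \<le> m" for m N
    using that
  proof (induction m rule: dec_induct)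
    case base then show ?case by simp
  next
    case (step k) then show ?case using H by blast
  qed
  have img: "f m ` A \<subseteq> f N ` A" if "N \<le> m" for m N
  proof -
    have "f m \<in> ?I (f N)" using chain[OF that] self_in[OF assms(1) fT] by blast
    then obtain g where g: "g \<in> ?T" "f m = compose A (f N) g"
      unfolding principal_right_ideal_def by auto
    show ?thesis using g End_Pi[OF g(1)] by (auto simp: compose_eq)
  qed
  define \<rho> where "\<rho> n = rees A (f n ` A)" for n
  have "\<forall>n. act_congruence A act (\<rho> n)"
    using rees_cong[OF assms(1)] fT unfolding \<rho>_def End_act_def by auto
  moreover have "\<forall>n. \<rho> (Suc n) \<subseteq> \<rho> n"
    using img[of n "Suc n" for n] unfolding \<rho>_def rees_def by auto
  ultimately obtain N where N: "\<forall>m\<ge>N. \<rho> m = \<rho> N"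
    using assms(2) unfolding artinian_act_def by blast
  have fPi: "\<And>n. f n \<in> A \<rightarrow> A" using End_Pi fT by blast
  have imgeq: "f m ` A = f N ` A" if "N \<le> m" for m
  proof
    show "f m ` A \<subseteq> f N ` A" using img[OF that] .
    show "f N ` A \<subseteq> f m ` A"
    proof
      fix y assume "y \<in> f N ` A"
      then obtain a where a: "a \<in> A" "y = f N a" by auto
      have fma: "f m a \<in> f N ` A" using img[OF that] a by auto
      show "y \<in> f m ` A"
      proof (cases "y = f m a")
        case True then show ?thesis using a by auto
      next
        case False
        have yA: "y \<in> A" using a fPi[of N] by (simp add: Pi_iff)
        have fmA: "f m a \<in> A" using a fPi[of m] by (simp add: Pi_iff)
        have yN: "y \<in> f N ` A" using a by blast
        have "(y, f m a) \<in> \<rho> N" unfolding \<rho>_def rees_def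
          using yA fmA yN fma by blast
        then have "(y, f m a) \<in> \<rho> m" using N that by metis
        then show ?thesis using False unfolding \<rho>_def rees_def by blast
      qed
    qed
  qed
  show "\<exists>N. \<forall>m\<ge>N. ?I (f m) = ?I (f N)"
  proof (intro exI allI impI)
    fix m assume m: "N \<le> m"
    let ?C = "f N ` A"
    have raC: "right_act ?C act"
    proof -
      have "act y s \<in> ?C" if "y \<in> ?C" for y s
      proof -
        from that obtain a where a: "a \<in> A" "y = f N a" by auto
        have "act y s = f N (act a s)" using fT[of N] a unfolding End_act_def act_hom_def by auto
        moreover have "act a s \<in> A" using assms(1) a unfolding right_act_def by auto
        ultimately show ?thesis by auto
      qed
      moreover have "\<forall>y\<in>?C. act y 1 = y" "\<forall>y\<in>?C. \<forall>s t. act (act y s) t = act y (s * t)"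
        using assms(1) fPi[of N] unfolding right_act_def by (auto simp: Pi_iff)
      ultimately show ?thesis unfolding right_act_def by blast
    qed
    have hg: "act_hom A act ?C act (f m)" using fT[of m] imgeq[OF m]
      unfolding End_act_def act_hom_def by auto
    have hh: "act_hom A act ?C act (f N)" using fT[of N]
      unfolding End_act_def act_hom_def by auto
    obtain k where k: "act_hom A act A act k" "\<forall>a\<in>A. f m (k a) = f N a"
    proof -
      have P: "\<And>(B::'a set) actB (C::'a set) actC g h. right_act B actB \<and> right_act C actC \<and>
        act_hom B actB C actC g \<and> g ` B = C \<and> act_hom A act C actC h \<Longrightarrow>
        (\<exists>k. act_hom A act B actB k \<and> (\<forall>a\<in>A. g (k a) = h a))"
        using assms(3) unfolding projective_act_def by blast
      have "\<exists>k. act_hom A act A act k \<and> (\<forall>a\<in>A. f m (k a) = f N a)"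
        by (rule P[where C="f N ` A" and actC=act]) (intro conjI assms(1) raC hg hh imgeq[OF m])
      then show ?thesis using that by blast
    qed
    have kT: "restrict k A \<in> ?T" using k(1) assms(1) unfolding End_act_def act_hom_def right_act_def
      by auto
    have "compose A (f m) (restrict k A) = f N"
    proof (rule extensionalityI[of _ A])
      show "compose A (f m) (restrict k A) \<in> extensional A" by simp
      show "f N \<in> extensional A" using fT[of N] unfolding End_act_def by auto
      show "\<And>x. x \<in> A \<Longrightarrow> compose A (f m) (restrict k A) x = f N x"
        using k(2) by (simp add: compose_eq)
    qed
    then have "f N \<in> ?I (f m)" unfolding principal_right_ideal_def using kT by force
    then have "?I (f N) \<subseteq> ?I (f m)" by (rule ideal_mono[OF assms(1)])
    then show "?I (f m) = ?I (f N)" using chain[OF m] by blast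
  qed
qed

end
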